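(* Let $n\geq 2$ be an integer and let $G$ be a tree of order $m\geq 3$. Then $\chi_{ld}(G[\overline{K_{n}}])=2$ if and only if $G$ is a star $K_{1,m-1}$.
   Context: All graphs are finite, simple and undirected. For a graph $G=(V,E)$ of order $N$ without isolated vertices, a bijection $f\colon V\to\{1,2,\dots,N\}$ is a local distance antimagic labeling if $w(u)\neq w(v)$ for every edge $uv$, where $w(u)=\sum_{x\in N(u)}f(x)$ and $N(u)$ is the open neighborhood of $u$. $\chi_{ld}(G)$ is the minimum number of distinct weights over all local distance antimagic labelings of $G$. $\overline{K_n}$ is the edgeless graph on $n$ vertices. The lexicographic product $G[H]$ has vertex set $V(G)\times V(H)$, with $(g,h)$ adjacent to $(g',h')$ iff $gg'\in E(G)$, or $g=g'$ and $hh'\in E(H)$. *)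

theory Defs
  imports Main
begin

definition is_graph :: "'a set \<Rightarrow> ('a \<Rightarrow> 'a \<Rightarrow> bool) \<Rightarrow> bool" where
  "is_graph V E \<longleftrightarrow> finite V \<and> (\<forall>u v. E u v \<longrightarrow> u \<in> V \<and> v \<in> V \<and> u \<noteq> v \<and> E v u)"

definition nbhd :: "'a set \<Rightarrow> ('a \<Rightarrow> 'a \<Rightarrow> bool) \<Rightarrow> 'a \<Rightarrow> 'a set" where
  "nbhd V E u = {x \<in> V. E u x}"

definition weight :: "'a set \<Rightarrow> ('a \<Rightarrow> 'a \<Rightarrow> bool) \<Rightarrow> ('a \<Rightarrow> nat) \<Rightarrow> 'a \<Rightarrow> nat" where
  "weight V E f u = (\<Sum>x\<in>nbhd V E u. f x)"

definition local_dist_antimagic :: "'a set \<Rightarrow> ('a \<Rightarrow> 'a \<Rightarrow> bool) \<Rightarrow> ('a \<Rightarrow> nat) \<Rightarrow> bool" where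
  "local_dist_antimagic V E f \<longleftrightarrow> bij_betw f V {1..card V} \<and>
     (\<forall>u v. u \<in> V \<and> v \<in> V \<and> E u v \<longrightarrow> weight V E f u \<noteq> weight V E f v)"

definition chi_ld :: "'a set \<Rightarrow> ('a \<Rightarrow> 'a \<Rightarrow> bool) \<Rightarrow> nat" where
  "chi_ld V E = (LEAST k. \<exists>f. local_dist_antimagic V E f \<and> card (weight V E f ` V) = k)"

definition connected_graph :: "'a set \<Rightarrow> ('a \<Rightarrow> 'a \<Rightarrow> bool) \<Rightarrow> bool" where
  "connected_graph V E \<longleftrightarrow> (\<forall>u\<in>V. \<forall>v\<in>V. E\<^sup>*\<^sup>* u v)"

definition acyclic_graph :: "'a set \<Rightarrow> ('a \<Rightarrow> 'a \<Rightarrow> bool) \<Rightarrow> bool" where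
  "acyclic_graph V E \<longleftrightarrow> \<not> (\<exists>xs. length xs \<ge> 3 \<and> distinct xs \<and> set xs \<subseteq> V \<and>
      (\<forall>i. i + 1 < length xs \<longrightarrow> E (xs ! i) (xs ! (i + 1))) \<and> E (last xs) (hd xs))"

definition is_tree :: "'a set \<Rightarrow> ('a \<Rightarrow> 'a \<Rightarrow> bool) \<Rightarrow> bool" where
  "is_tree V E \<longleftrightarrow> is_graph V E \<and> V \<noteq> {} \<and> connected_graph V E \<and> acyclic_graph V E"

definition is_star :: "'a set \<Rightarrow> ('a \<Rightarrow> 'a \<Rightarrow> bool) \<Rightarrow> bool" where
  "is_star V E \<longleftrightarrow> (\<exists>c\<in>V. \<forall>u v. E u v \<longleftrightarrow> (u \<in> V \<and> v \<in> V \<and> u \<noteq> v \<and> (u = c \<or> v = c)))"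

text \<open>Lexicographic product G[H]: vertex set V(G) x V(H).\<close>
definition lex_edges :: "('a \<Rightarrow> 'a \<Rightarrow> bool) \<Rightarrow> ('b \<Rightarrow> 'b \<Rightarrow> bool) \<Rightarrow> ('a \<times> 'b) \<Rightarrow> ('a \<times> 'b) \<Rightarrow> bool" where
  "lex_edges E F = (\<lambda>(g, h) (g', h'). E g g' \<or> (g = g' \<and> F h h'))"

definition empty_verts :: "nat \<Rightarrow> nat set" where "empty_verts n = {0..<n}"
definition empty_edges :: "nat \<Rightarrow> nat \<Rightarrow> bool" where "empty_edges = (\<lambda>_ _. False)"

end

theory Submission
  imports Defs
begin

definition gpath :: "'a set \<Rightarrow> ('a \<Rightarrow> 'a \<Rightarrow> bool) \<Rightarrow> 'a list \<Rightarrow> bool" where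
  "gpath V E xs \<longleftrightarrow> distinct xs \<and> set xs \<subseteq> V \<and> (\<forall>i. i + 1 < length xs \<longrightarrow> E (xs ! i) (xs ! (i + 1)))"

lemma tree_has_edge:
  assumes "is_tree V E" "2 \<le> card V"
  shows "\<exists>u v. E u v"
proof -
  from assms have fin: "finite V" by (auto simp: is_tree_def is_graph_def)
  have "V \<noteq> {}" using assms(2) by auto
  then obtain u where u: "u \<in> V" by blast
  have "card (V - {u}) \<ge> 1" using assms(2) fin u by simp
  then have "V - {u} \<noteq> {}" by (metis card.empty not_one_le_zero)
  then obtain v where v: "v \<in> V" "v \<noteq> u" by blast
  then have "E\<^sup>*\<^sup>* u v" using assms(1) u by (auto simp: is_tree_def connected_graph_def)
  then show ?thesis using v(2) by (cases rule: converse_rtranclpE) auto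
qed
lemma tree_leaf:
  assumes "is_tree V E" "2 \<le> card V"
  shows "\<exists>a b. a \<in> V \<and> E a b \<and> (\<forall>u. E a u \<longrightarrow> u = b)"
proof -
  have g: "is_graph V E" and ac: "acyclic_graph V E" using assms(1) by (auto simp: is_tree_def)
  have fin: "finite V" using g by (simp add: is_graph_def)
  obtain u v where e: "E u v" using tree_has_edge[OF assms] by blast
  then have "gpath V E [u, v]" using g
    by (auto simp: gpath_def is_graph_def less_Suc_eq nth_Cons split: nat.splits)
  define P where "P xs \<longleftrightarrow> gpath V E xs \<and> 2 \<le> length xs" for xs
  have P0: "P [u, v]" using \<open>gpath V E [u, v]\<close> by (simp add: P_def)
  have bnd: "\<forall>xs. P xs \<longrightarrow> length xs < card V + 1"
  proof (intro allI impI)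
    fix xs assume "P xs"
    then have "distinct xs" "set xs \<subseteq> V" by (auto simp: P_def gpath_def)
    then have "length xs \<le> card V" by (metis card_mono[OF fin] distinct_card)
    then show "length xs < card V + 1" by simp
  qed
  obtain xs where Pxs: "P xs" and mx: "\<forall>ys. P ys \<longrightarrow> length ys \<le> length xs"
    using Lattices_Big.ex_has_greatest_nat[of P "[u,v]" length "card V + 1"] P0 bnd by blast
  have d: "distinct xs" and sV: "set xs \<subseteq> V" and ed: "\<And>i. i + 1 < length xs \<Longrightarrow> E (xs ! i) (xs ! (i + 1))"
    and l2: "2 \<le> length xs" using Pxs by (auto simp: P_def gpath_def)
  define a where "a = xs ! 0"
  define b where "b = xs ! 1"
  have "xs ! 0 \<in> set xs" using l2 by (cases xs) auto
  then have aV: "a \<in> V" using sV by (auto simp: a_def)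
  have ab: "E a b" using ed[of 0] l2 by (simp add: a_def b_def)
  have "\<forall>w. E a w \<longrightarrow> w = b"
  proof (intro allI impI)
    fix w assume aw: "E a w"
    show "w = b"
    proof (cases "w \<in> set xs")
      case False
      have wV: "w \<in> V" using aw g by (auto simp: is_graph_def)
      have "gpath V E (w # xs)"
        unfolding gpath_def
      proof (intro conjI allI impI)
        show "distinct (w # xs)" using False d by simp
        show "set (w # xs) \<subseteq> V" using wV sV by simp
        fix i assume "i + 1 < length (w # xs)"
        then show "E ((w # xs) ! i) ((w # xs) ! (i + 1))"
        proof (cases i)
          case 0
          then show ?thesis using aw g l2 by (auto simp: a_def is_graph_def hd_conv_nth)
        next
          case (Suc i')
          then show ?thesis using ed[of i'] \<open>i + 1 < length (w # xs)\<close> by simp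
        qed
      qed
      then have "P (w # xs)" using l2 by (simp add: P_def)
      then show ?thesis using mx by fastforce
    next
      case True
      then obtain i where i: "i < length xs" "xs ! i = w" by (meson in_set_conv_nth)
      show ?thesis
      proof (cases "i \<le> 1")
        case True
        then have "i = 0 \<or> i = 1" by auto
        then show ?thesis
        proof
          assume "i = 0" then have "w = a" using i by (simp add: a_def)
          then show ?thesis using aw g by (auto simp: is_graph_def)
        next
          assume "i = 1" then show ?thesis using i by (simp add: b_def)
        qed
      next
        case False
        define cs where "cs = take (i + 1) xs"
        have lcs: "length cs = i + 1" using i by (simp add: cs_def)
        have "length cs \<ge> 3" using False lcs by simp
        moreover have "distinct cs" using d by (simp add: cs_def)
        moreover have "set cs \<subseteq> V" using sV set_take_subset[of "i+1" xs] unfolding cs_def by blast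
        moreover have "\<forall>j. j + 1 < length cs \<longrightarrow> E (cs ! j) (cs ! (j + 1))"
          using ed lcs i by (simp add: cs_def)
        moreover have "last cs = w" using i lcs
          by (simp add: cs_def take_Suc_conv_app_nth)
        moreover have "hd cs = a" using i lcs by (cases xs) (auto simp: cs_def a_def)
        moreover have "E w a" using aw g by (auto simp: is_graph_def)
        ultimately have "\<exists>xs. length xs \<ge> 3 \<and> distinct xs \<and> set xs \<subseteq> V \<and>
           (\<forall>i. i + 1 < length xs \<longrightarrow> E (xs ! i) (xs ! (i + 1))) \<and> E (last xs) (hd xs)"
          by (intro exI[of _ cs]) simp
        then show ?thesis using ac by (simp add: acyclic_graph_def)
      qed
    qed
  qed
  then show ?thesis using aV ab by blast
qed

lemma leaf_removal_conn:
  assumes leaf: "\<And>w. E a w \<Longrightarrow> w = b" and sym: "\<And>x y. E x y \<Longrightarrow> E y x"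
    and ba: "b \<noteq> a" and "E\<^sup>*\<^sup>* u w" and "u \<noteq> a"
  shows "(w \<noteq> a \<longrightarrow> (\<lambda>x y. E x y \<and> x \<noteq> a \<and> y \<noteq> a)\<^sup>*\<^sup>* u w) \<and>
         (w = a \<longrightarrow> (\<lambda>x y. E x y \<and> x \<noteq> a \<and> y \<noteq> a)\<^sup>*\<^sup>* u b)"
  using assms(4)
proof (induction rule: rtranclp_induct)
  case base
  then show ?case using assms(5) by simp
next
  case (step y z)
  show ?case
  proof (cases "z = a")
    case True
    then have "y = b" using step(2) sym leaf by blast
    moreover have "y \<noteq> a" using \<open>y = b\<close> ba by simp
    ultimately show ?thesis using step(3) True by simp
  next
    case False
    show ?thesis
    proof (cases "y = a")
      case True
      then have "z = b" using step(2) leaf by blast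
      then show ?thesis using step(3) True False by simp
    next
      case False2: False
      then have "(\<lambda>x y. E x y \<and> x \<noteq> a \<and> y \<noteq> a)\<^sup>*\<^sup>* u y" using step(3) by simp
      then show ?thesis using False False2 step(2)
        by (simp add: rtranclp.rtrancl_into_rtrancl)
    qed
  qed
qed

lemma tree_remove_leaf:
  assumes t: "is_tree V E" and aV: "a \<in> V" and ab: "E a b" and leaf: "\<And>w. E a w \<Longrightarrow> w = b"
  shows "is_tree (V - {a}) (\<lambda>x y. E x y \<and> x \<noteq> a \<and> y \<noteq> a)"
proof -
  have g: "is_graph V E" and ac: "acyclic_graph V E" and c: "connected_graph V E"
    using t by (auto simp: is_tree_def)
  have sym: "\<And>x y. E x y \<Longrightarrow> E y x" using g by (auto simp: is_graph_def)
  have ba: "b \<noteq> a" "b \<in> V" using g ab by (auto simp: is_graph_def)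
  have "is_graph (V - {a}) (\<lambda>x y. E x y \<and> x \<noteq> a \<and> y \<noteq> a)"
    using g by (auto simp: is_graph_def)
  moreover have "V - {a} \<noteq> {}" using ba by blast
  moreover have "connected_graph (V - {a}) (\<lambda>x y. E x y \<and> x \<noteq> a \<and> y \<noteq> a)"
    unfolding connected_graph_def
  proof (intro ballI)
    fix u v assume u: "u \<in> V - {a}" and v: "v \<in> V - {a}"
    then have "E\<^sup>*\<^sup>* u v" using c by (auto simp: connected_graph_def)
    then show "(\<lambda>x y. E x y \<and> x \<noteq> a \<and> y \<noteq> a)\<^sup>*\<^sup>* u v"
      using leaf_removal_conn[of E a b u v, OF leaf sym ba(1)] u v by blast
  qed
  moreover have "acyclic_graph (V - {a}) (\<lambda>x y. E x y \<and> x \<noteq> a \<and> y \<noteq> a)"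
    using ac unfolding acyclic_graph_def by blast
  ultimately show ?thesis by (simp add: is_tree_def)
qed

lemma tree_bipartite:
  assumes "is_tree V E"
  shows "\<exists>H. \<forall>u v. E u v \<longrightarrow> (u \<in> H \<longleftrightarrow> v \<notin> H)"
  using assms
proof (induction "card V" arbitrary: V E rule: less_induct)
  case less
  have g: "is_graph V E" using less.prems by (simp add: is_tree_def)
  show ?case
  proof (cases "2 \<le> card V")
    case False
    have "\<not> E u v" for u v
    proof
      assume "E u v"
      then have "u \<in> V" "v \<in> V" "u \<noteq> v" using g by (auto simp: is_graph_def)
      then have "card {u, v} \<le> card V" using g by (intro card_mono) (auto simp: is_graph_def)
      then show False using False \<open>u \<noteq> v\<close> by simp
    qed
    then show ?thesis by blast
  next
    case True
    obtain a b where aV: "a \<in> V" and ab: "E a b" and leaf: "\<And>u. E a u \<Longrightarrow> u = b"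
      using tree_leaf[OF less.prems True] by blast
    have sym: "\<And>x y. E x y \<Longrightarrow> E y x" using g by (auto simp: is_graph_def)
    have fin: "finite V" using g by (simp add: is_graph_def)
    have ba: "b \<noteq> a" using g ab by (auto simp: is_graph_def)
    have "card (V - {a}) < card V" by (rule card_Diff1_less[OF fin aV])
    then obtain H' where H': "\<forall>u v. E u v \<and> u \<noteq> a \<and> v \<noteq> a \<longrightarrow> (u \<in> H' \<longleftrightarrow> v \<notin> H')"
      using less.hyps[OF _ tree_remove_leaf[OF less.prems aV ab leaf]] by blast
    define H where "H = (if b \<in> H' then H' - {a} else insert a H')"
    have "E u v \<longrightarrow> (u \<in> H \<longleftrightarrow> v \<notin> H)" for u v
    proof
      assume e: "E u v"
      show "u \<in> H \<longleftrightarrow> v \<notin> H"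
      proof (cases "u = a")
        case True
        then have "v = b" using e leaf by blast
        then show ?thesis using True ba by (auto simp: H_def)
      next
        case False
        show ?thesis
        proof (cases "v = a")
          case True
          then have "u = b" using e leaf sym by blast
          then show ?thesis using True ba by (auto simp: H_def)
        next
          case False2: False
          then show ?thesis using H' e False by (auto simp: H_def)
        qed
      qed
    qed
    then show ?thesis by blast
  qed
qed

definition tau :: "nat \<Rightarrow> nat \<Rightarrow> nat \<Rightarrow> nat" where
  "tau b0 k j = (if b0 \<le> j \<and> j < b0 + 2*k then (if even (j - b0) then j + 1 else j - 1) else j)"

definition alpha :: "nat \<Rightarrow> nat \<Rightarrow> nat" where
  "alpha m j = (if j < m - m div 2 then j + m div 2 else j + m div 2 - m)"

definition beta :: "nat \<Rightarrow> nat \<Rightarrow> nat" where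
  "beta m j = (if j < m - m div 2 then 2 * (m - m div 2 - 1) - 2 * j else 2 * m - 1 - 2 * j)"

definition prow :: "nat \<Rightarrow> nat \<Rightarrow> nat \<Rightarrow> nat \<Rightarrow> nat \<Rightarrow> nat \<Rightarrow> nat" where
  "prow n m b0 k i j = (if i = 0 then tau b0 k j else if odd n \<and> i = 1 then alpha m j
     else if odd n \<and> i = 2 then beta m j else if even (i + n) then j else m - 1 - j)"

lemma tau_up: "b0 \<le> j \<Longrightarrow> j < b0 + 2*k \<Longrightarrow> even (j - b0) \<Longrightarrow>
   tau b0 k j = j + 1 \<and> b0 \<le> j + 1 \<and> j + 1 < b0 + 2*k \<and> odd (j + 1 - b0)"
proof -
  assume a: "b0 \<le> j" "j < b0 + 2*k" "even (j - b0)"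
  then have "j + 1 < b0 + 2*k" by presburger
  moreover have "odd (j + 1 - b0)" using a by presburger
  ultimately show ?thesis using a by (simp add: tau_def)
qed

lemma tau_down: "b0 \<le> j \<Longrightarrow> j < b0 + 2*k \<Longrightarrow> odd (j - b0) \<Longrightarrow>
   tau b0 k j = j - 1 \<and> b0 \<le> j - 1 \<and> j - 1 < b0 + 2*k \<and> even (j - 1 - b0) \<and> 1 \<le> j"
proof -
  assume a: "b0 \<le> j" "j < b0 + 2*k" "odd (j - b0)"
  then have "b0 + 1 \<le> j" by presburger
  moreover have "even (j - 1 - b0)" using a by presburger
  ultimately show ?thesis using a unfolding tau_def by auto
qed

lemma tau_out: "\<not> (b0 \<le> j \<and> j < b0 + 2*k) \<Longrightarrow> tau b0 k j = j"
  unfolding tau_def by auto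

lemma tau_cases:
  obtains "b0 \<le> j" "j < b0 + 2*k" "even (j - b0)"
  | "b0 \<le> j" "j < b0 + 2*k" "odd (j - b0)"
  | "\<not> (b0 \<le> j \<and> j < b0 + 2*k)"
  by blast

lemma tau_lt: "j < m \<Longrightarrow> b0 + 2*k \<le> m \<Longrightarrow> tau b0 k j < m"
  by (cases rule: tau_cases[of b0 j k]) (auto dest: tau_up tau_down simp: tau_out)

lemma tau_invol: "j < m \<Longrightarrow> b0 + 2*k \<le> m \<Longrightarrow> tau b0 k (tau b0 k j) = j"
proof (cases rule: tau_cases[of b0 j k])
  case 1
  then show ?thesis using tau_up[OF 1] tau_down[of b0 "j+1" k] by simp
next
  case 2
  then show ?thesis using tau_down[OF 2] tau_up[of b0 "j-1" k] by simp
qed (simp add: tau_out)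

lemma tau_bij: "b0 + 2*k \<le> m \<Longrightarrow> bij_betw (tau b0 k) {0..<m} {0..<m}"
  by (rule bij_betw_byWitness[where f'="tau b0 k"]) (auto simp: tau_lt tau_invol)

lemma tau_bounds: "tau b0 k j \<le> j + 1" "j \<le> tau b0 k j + 1"
  unfolding tau_def by auto


lemma id_bij': "bij_betw (\<lambda>j. j) {0..<m} {0..<m}"
  by (simp add: bij_betw_def)

lemma endo_bij: "inj_on (f::nat\<Rightarrow>nat) {0..<m} \<Longrightarrow> (\<And>j. j < m \<Longrightarrow> f j < m) \<Longrightarrow> bij_betw f {0..<m} {0..<m}"
  unfolding bij_betw_def by (rule conjI, assumption, rule endo_inj_surj) auto

lemma rev_bij: "bij_betw (\<lambda>j. m - 1 - j) {0..<m} {0..<(m::nat)}"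
proof (rule endo_bij)
  show "inj_on (\<lambda>j. m - 1 - j) {0..<m}" by (rule inj_onI) auto
qed auto

lemma half_facts: "2 * (m div 2) \<le> (m::nat)" "m \<le> 2 * (m div 2) + 1"
  by auto

lemma alpha_bij: "bij_betw (alpha m) {0..<m} {0..<m}"
proof (rule endo_bij)
  show "inj_on (alpha m) {0..<m}"
  proof (rule inj_onI)
    fix x y assume x: "x \<in> {0..<m}" and y: "y \<in> {0..<m}" and e: "alpha m x = alpha m y"
    have h: "2 * (m div 2) \<le> m" using half_facts by blast
    show "x = y"
    proof (cases "x < m - m div 2"; cases "y < m - m div 2")
      assume "x < m - m div 2" "y < m - m div 2" then show ?thesis using e by (simp add: alpha_def)
    next
      assume "x < m - m div 2" "\<not> y < m - m div 2" then show ?thesis using e x y h by (simp add: alpha_def)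
    next
      assume "\<not> x < m - m div 2" "y < m - m div 2" then show ?thesis using e x y h by (simp add: alpha_def)
    next
      assume "\<not> x < m - m div 2" "\<not> y < m - m div 2" then show ?thesis using e x y h by (simp add: alpha_def)
    qed
  qed
  show "\<And>j. j < m \<Longrightarrow> alpha m j < m" unfolding alpha_def by auto
qed

lemma beta_bij: "bij_betw (beta m) {0..<m} {0..<m}"
proof (rule endo_bij)
  have h: "2 * (m div 2) \<le> m" "m \<le> 2 * (m div 2) + 1" using half_facts by blast+
  have ev: "beta m x = 2 * (m - m div 2 - 1 - x)" if "x < m - m div 2" for x
    using that by (simp add: beta_def right_diff_distrib')
  have od: "beta m x = 2 * (m - 1 - x) + 1" if "\<not> x < m - m div 2" "x < m" for x
    using that by (simp add: beta_def)
  show "inj_on (beta m) {0..<m}"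
  proof (rule inj_onI)
    fix x y assume x: "x \<in> {0..<m}" and y: "y \<in> {0..<m}" and e: "beta m x = beta m y"
    show "x = y"
    proof (cases "x < m - m div 2"; cases "y < m - m div 2")
      assume a: "x < m - m div 2" "y < m - m div 2" then show ?thesis using e ev[OF a(1)] ev[OF a(2)] by simp arith
    next
      assume a: "x < m - m div 2" "\<not> y < m - m div 2" then show ?thesis using e ev[OF a(1)] od[OF a(2)] y
        by simp presburger
    next
      assume a: "\<not> x < m - m div 2" "y < m - m div 2" then show ?thesis using e od[OF a(1)] ev[OF a(2)] x
        by simp presburger
    next
      assume a: "\<not> x < m - m div 2" "\<not> y < m - m div 2" then show ?thesis using e od[OF a(1)] od[OF a(2)] x y
        by simp
    qed
  qed
  show "\<And>j. j < m \<Longrightarrow> beta m j < m" unfolding beta_def using h by auto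
qed

lemma ab_sum: "j < m \<Longrightarrow> j + alpha m j + beta m j =
   (if j < m - m div 2 then 2*m - m div 2 - 2 else m + m div 2 - 1)"
proof -
  assume j: "j < m"
  have h: "2 * (m div 2) \<le> m" "m \<le> 2 * (m div 2) + 1" using half_facts by blast+
  show ?thesis
  proof (cases "j < m - m div 2")
    case True
    then have "2 * j \<le> 2 * (m - m div 2 - 1)" by simp
    then show ?thesis using True h j by (simp add: alpha_def beta_def) arith
  next
    case False
    then show ?thesis using h j by (simp add: alpha_def beta_def)
  qed
qed

lemma prow_bij: "b0 + 2*k \<le> m \<Longrightarrow> bij_betw (prow n m b0 k i) {0..<m} {0..<m}"
proof -
  assume bk: "b0 + 2*k \<le> m"
  consider "i = 0" | "i \<noteq> 0" "odd n \<and> i = 1" | "i \<noteq> 0" "\<not>(odd n \<and> i = 1)" "odd n \<and> i = 2"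
    | "i \<noteq> 0" "\<not>(odd n \<and> i = 1)" "\<not>(odd n \<and> i = 2)" "even (i + n)"
    | "i \<noteq> 0" "\<not>(odd n \<and> i = 1)" "\<not>(odd n \<and> i = 2)" "odd (i + n)" by blast
  then show ?thesis
  proof cases
    case 1
    then have "prow n m b0 k i = tau b0 k" by (intro ext) (simp add: prow_def)
    then show ?thesis using tau_bij[OF bk] by simp
  next
    case 2
    then have "prow n m b0 k i = alpha m" by (intro ext) (simp add: prow_def)
    then show ?thesis using alpha_bij by simp
  next
    case 3
    then have "prow n m b0 k i = beta m" by (intro ext) (simp add: prow_def)
    then show ?thesis using beta_bij by simp
  next
    case 4
    then have "prow n m b0 k i = (\<lambda>j. j)" by (intro ext) (auto simp: prow_def)
    then show ?thesis using id_bij' by simp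
  next
    case 5
    then have "prow n m b0 k i = (\<lambda>j. m - 1 - j)" by (intro ext) (auto simp: prow_def)
    then show ?thesis using rev_bij by simp
  qed
qed

lemma pairs_sum: "j < m \<Longrightarrow> 2*t \<le> n \<Longrightarrow>
  (\<Sum>i\<in>{n - 2*t..<n}. (if even (i + n) then j else m - 1 - (j::nat))) = t * (m - 1)"
proof (induction t)
  case 0
  then show ?case by simp
next
  case (Suc t)
  define a where "a = n - 2 * Suc t"
  have a1: "a < n" "Suc a < n" "Suc (Suc a) = n - 2 * t" using Suc.prems by (auto simp: a_def)
  have pa: "even (a + n)" "odd (Suc a + n)" using Suc.prems by (auto simp: a_def)
  have "(\<Sum>i\<in>{a..<n}. (if even (i + n) then j else m - 1 - j)) =
        j + ((m - 1 - j) + (\<Sum>i\<in>{Suc (Suc a)..<n}. (if even (i + n) then j else m - 1 - j)))"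
    using a1 pa by (simp add: sum.atLeast_Suc_lessThan)
  also have "\<dots> = j + (m - 1 - j) + t * (m - 1)" using Suc a1 by simp
  also have "\<dots> = Suc t * (m - 1)" using Suc.prems by simp
  finally show ?case by (simp add: a_def)
qed

definition Psum :: "nat \<Rightarrow> nat \<Rightarrow> nat \<Rightarrow> nat \<Rightarrow> nat \<Rightarrow> nat" where
  "Psum n m b0 k j = (\<Sum>i<n. prow n m b0 k i j)"

definition Kf :: "nat \<Rightarrow> nat \<Rightarrow> nat \<Rightarrow> nat" where
  "Kf n m j = (if odd n then (if j < m - m div 2 then 2*m - m div 2 - 2 else m + m div 2 - 1) else m - 1)"

definition Rf :: "nat \<Rightarrow> nat \<Rightarrow> nat" where
  "Rf n m = ((n - (if odd n then 3 else 2)) div 2) * (m - 1)"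

lemma Psum_formula:
  assumes n2: "2 \<le> n" and j: "j < m"
  shows "Psum n m b0 k j + j = tau b0 k j + Kf n m j + Rf n m"
proof -
  define a where "a = (if odd n then 3 else 2::nat)"
  have an: "a \<le> n" using n2 by (auto simp: a_def elim: oddE)
  define t where "t = (n - a) div 2"
  have t2: "n - 2 * t = a" "2 * t \<le> n" using n2 an by (auto simp: t_def a_def elim!: oddE evenE)
  have "Psum n m b0 k j = (\<Sum>i\<in>{0..<a}. prow n m b0 k i j) + (\<Sum>i\<in>{a..<n}. prow n m b0 k i j)"
    unfolding Psum_def using an by (simp add: atLeast0LessThan[symmetric] sum.atLeastLessThan_concat)
  moreover have "(\<Sum>i\<in>{a..<n}. prow n m b0 k i j) =
      (\<Sum>i\<in>{n - 2*t..<n}. (if even (i + n) then j else m - 1 - j))"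
    using t2 by (intro sum.cong) (auto simp: prow_def a_def)
  moreover have "\<dots> = Rf n m" using pairs_sum[OF j t2(2)] by (simp add: Rf_def t_def a_def)
  moreover have "(\<Sum>i\<in>{0..<a}. prow n m b0 k i j) + j = tau b0 k j + Kf n m j"
  proof (cases "odd n")
    case True
    then have "(\<Sum>i\<in>{0..<a}. prow n m b0 k i j) = tau b0 k j + alpha m j + beta m j"
      by (simp add: a_def prow_def numeral_3_eq_3)
    then show ?thesis using ab_sum[OF j] True by (simp add: Kf_def)
  next
    case False
    have "odd (Suc n)" using False by simp
    then have "(\<Sum>i\<in>{0..<a}. prow n m b0 k i j) = tau b0 k j + (m - 1 - j)"
      using False by (simp add: a_def prow_def numeral_2_eq_2)
    then show ?thesis using False j by (simp add: Kf_def)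
  qed
  ultimately show ?thesis by simp
qed

lemma evens_mem: "(j \<in> (\<lambda>i. c + 2*i) ` {0..<k}) \<longleftrightarrow> c \<le> j \<and> j < c + 2*k \<and> even (j - (c::nat))"
proof
  assume "j \<in> (\<lambda>i. c + 2*i) ` {0..<k}"
  then show "c \<le> j \<and> j < c + 2*k \<and> even (j - c)" by auto
next
  assume a: "c \<le> j \<and> j < c + 2*k \<and> even (j - c)"
  then have "even (j - c)" by blast
  then obtain i where "j - c = 2 * i" by (rule dvdE)
  then have "j = c + 2 * i" "i < k" using a by auto
  then show "j \<in> (\<lambda>i. c + 2*i) ` {0..<k}" by auto
qed

lemma evens_card: "card ((\<lambda>i. c + 2*i) ` {0..<k}) = (k::nat)"
  by (subst card_image) (auto simp: inj_on_def)

lemma Psum_A: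
  assumes n2: "2 \<le> n" and j: "j < m" and A: "even n \<or> odd m" and m3: "3 \<le> m"
  defines "Kc \<equiv> (if odd n then 2*m - m div 2 - 2 else m - 1)"
  shows "Psum n m 0 k j = (if j < 2*k then (if even j then Kc + Rf n m + 1 else Kc + Rf n m - 1) else Kc + Rf n m)"
    and "1 \<le> Kc" "m - 1 \<le> Kc"
proof -
  have K: "Kf n m j = Kc"
  proof (cases "odd n")
    case True
    then have "odd m" using A by simp
    then obtain h where "m = 2*h + 1" by (auto elim: oddE)
    then show ?thesis using True by (simp add: Kf_def Kc_def)
  qed (simp add: Kf_def Kc_def)
  have F: "Psum n m 0 k j + j = tau 0 k j + Kc + Rf n m" using Psum_formula[OF n2 j] K by simp
  show "Psum n m 0 k j = (if j < 2*k then (if even j then Kc + Rf n m + 1 else Kc + Rf n m - 1) else Kc + Rf n m)"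
  proof (cases "j < 2*k")
    case True
    show ?thesis
    proof (cases "even j")
      case True2: True
      then show ?thesis using tau_up[of 0 j k] True F by simp
    next
      case False
      then show ?thesis using tau_down[of 0 j k] True F by simp
    qed
  next
    case False
    then show ?thesis using tau_out[of 0 j k] F by simp
  qed
  have "2 * (m div 2) \<le> m" by simp
  then show "1 \<le> Kc" "m - 1 \<le> Kc" using m3 by (auto simp: Kc_def)
qed

lemma Psum_B:
  assumes n2: "2 \<le> n" and j: "j < m" and B: "odd n" "even m" and hk: "m div 2 + 2*k \<le> m"
  shows "Psum n m (m div 2) k j = (if j < m div 2 then 3*(m div 2) - 2 + Rf n m
     else if j < m div 2 + 2*k then (if even (j - m div 2) then 3*(m div 2) + Rf n m else 3*(m div 2) - 2 + Rf n m)
     else 3*(m div 2) - 1 + Rf n m)"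
proof -
  obtain h where m: "m = 2*h" using B by (auto elim: evenE)
  then have hm: "m div 2 = h" by simp
  have K: "Kf n m j = (if j < h then 3*h - 2 else 3*h - 1)" using B m by (simp add: Kf_def)
  have F: "Psum n m h k j + j = tau h k j + (if j < h then 3*h - 2 else 3*h - 1) + Rf n m"
    using Psum_formula[OF n2 j, of h k] K by simp
  have h1: "1 \<le> h" using j m by simp
  show ?thesis
  proof (cases "j < h")
    case True
    then show ?thesis using tau_out[of h j k] F hm by simp
  next
    case False
    show ?thesis
    proof (cases "j < h + 2*k")
      case True
      show ?thesis
      proof (cases "even (j - h)")
        case True2: True
        then show ?thesis using tau_up[of h j k] True False F h1 hm by simp
      next
        case False2: False
        then show ?thesis using tau_down[of h j k] True False F h1 hm by simp
      qed
    next
      case False2: False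
      then show ?thesis using tau_out[of h j k] False F h1 hm by simp
    qed
  qed
qed

lemma numeric:
  assumes n2: "2 \<le> n" and m3: "3 \<le> m" and p: "2*p \<le> m"
  shows "\<exists>b0 k \<theta> J \<mu>. b0 + 2*k \<le> m \<and> J \<subseteq> {0..<m} \<and> card J = p \<and>
     (\<forall>j\<in>J. \<theta> \<le> Psum n m b0 k j) \<and> (\<forall>j\<in>{0..<m} - J. Psum n m b0 k j < \<theta>) \<and>
     (\<forall>j<m. \<mu> \<le> Psum n m b0 k j \<and> Psum n m b0 k j \<le> \<mu> + 2) \<and> m \<le> \<mu> + 3"
proof (cases "even n \<or> odd m")
  case True
  define Kc where "Kc = (if odd n then 2*m - m div 2 - 2 else m - 1)"
  define R where "R = Rf n m"
  have PA: "\<And>j. j < m \<Longrightarrow> Psum n m 0 p j = (if j < 2*p then (if even j then Kc + R + 1 else Kc + R - 1) else Kc + R)"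
    and K1: "1 \<le> Kc" "m - 1 \<le> Kc"
    using Psum_A(1)[OF n2 _ True m3, where k=p] Psum_A(2,3)[OF n2 _ True m3, of 0] m3 by (auto simp: Kc_def R_def)
  define J where "J = (\<lambda>i. 0 + 2*i) ` {0..<p}"
  have "J \<subseteq> {0..<m}" using p by (auto simp: J_def)
  moreover have "card J = p" unfolding J_def by (rule evens_card)
  moreover have "\<forall>j\<in>J. Kc + R + 1 \<le> Psum n m 0 p j"
    using PA p by (auto simp: J_def)
  moreover have "\<forall>j\<in>{0..<m} - J. Psum n m 0 p j < Kc + R + 1"
  proof
    fix j assume j: "j \<in> {0..<m} - J"
    then have "\<not> (j < 2*p \<and> even j)" using evens_mem[of j 0 p] by (simp add: J_def)
    then show "Psum n m 0 p j < Kc + R + 1" using PA[of j] j K1 by auto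
  qed
  moreover have "\<forall>j<m. Kc + R - 1 \<le> Psum n m 0 p j \<and> Psum n m 0 p j \<le> Kc + R - 1 + 2"
    using PA K1 by auto
  moreover have "m \<le> Kc + R - 1 + 3" using K1 by simp
  moreover have "0 + 2*p \<le> m" using p by simp
  ultimately show ?thesis by blast
next
  case False
  then have B: "odd n" "even m" by auto
  obtain h where m: "m = 2*h" using B by (auto elim: evenE)
  then have hm: "m div 2 = h" by simp
  have h2: "2 \<le> h" using m3 m by simp
  define R where "R = Rf n m"
  show ?thesis
  proof (cases "2*p \<le> h")
    case True
    have PB: "\<And>j. j < m \<Longrightarrow> Psum n m h p j = (if j < h then 3*h - 2 + R
     else if j < h + 2*p then (if even (j - h) then 3*h + R else 3*h - 2 + R) else 3*h - 1 + R)"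
      using Psum_B[OF n2 _ B, where k=p] True m by (simp add: hm R_def)
    define J where "J = (\<lambda>i. h + 2*i) ` {0..<p}"
    have "J \<subseteq> {0..<m}" using True m by (auto simp: J_def)
    moreover have "card J = p" unfolding J_def by (rule evens_card)
    moreover have "\<forall>j\<in>J. 3*h + R \<le> Psum n m h p j"
      using PB True m by (auto simp: J_def)
    moreover have "\<forall>j\<in>{0..<m} - J. Psum n m h p j < 3*h + R"
    proof
      fix j assume j: "j \<in> {0..<m} - J"
      then have "\<not> (h \<le> j \<and> j < h + 2*p \<and> even (j - h))" using evens_mem[of j h p] by (simp add: J_def)
      then show "Psum n m h p j < 3*h + R" using PB[of j] j h2 by auto
    qed
    moreover have "\<forall>j<m. 3*h - 2 + R \<le> Psum n m h p j \<and> Psum n m h p j \<le> 3*h - 2 + R + 2"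
      using PB h2 by auto
    moreover have "m \<le> 3*h - 2 + R + 3" using m by simp
    moreover have "h + 2*p \<le> m" using True m by simp
    ultimately show ?thesis by blast
  next
    case False
    define k where "k = h - p"
    have k: "2*k < h" "h + 2*k \<le> m" "p = h - k" using False p m by (auto simp: k_def)
    have PB: "\<And>j. j < m \<Longrightarrow> Psum n m h k j = (if j < h then 3*h - 2 + R
     else if j < h + 2*k then (if even (j - h) then 3*h + R else 3*h - 2 + R) else 3*h - 1 + R)"
      using Psum_B[OF n2 _ B, where k=k] k m by (simp add: hm R_def)
    define J where "J = (\<lambda>i. h + 2*i) ` {0..<k} \<union> {h + 2*k..<m}"
    have "J \<subseteq> {0..<m}" using k m by (auto simp: J_def)
    moreover have "card J = p"
    proof -
      have "card J = card ((\<lambda>i. h + 2*i) ` {0..<k}) + card {h + 2*k..<m}"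
        unfolding J_def by (rule card_Un_disjoint) auto
      then show ?thesis using evens_card[of h k] k m by simp
    qed
    moreover have "\<forall>j\<in>J. 3*h - 1 + R \<le> Psum n m h k j"
      using PB k m h2 by (auto simp: J_def)
    moreover have "\<forall>j\<in>{0..<m} - J. Psum n m h k j < 3*h - 1 + R"
    proof
      fix j assume j: "j \<in> {0..<m} - J"
      then have "\<not> (h \<le> j \<and> j < h + 2*k \<and> even (j - h))" "j < h + 2*k" using evens_mem[of j h k]
        by (auto simp: J_def)
      then show "Psum n m h k j < 3*h - 1 + R" using PB[of j] j h2 by auto
    qed
    moreover have "\<forall>j<m. 3*h - 2 + R \<le> Psum n m h k j \<and> Psum n m h k j \<le> 3*h - 2 + R + 2"
      using PB h2 by auto
    moreover have "m \<le> 3*h - 2 + R + 3" using m by simp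
    ultimately show ?thesis using k(2) by blast
  qed
qed

lemma nbhd_lex: "g \<in> V \<Longrightarrow> nbhd (V \<times> {0..<n}) (lex_edges E empty_edges) (g, i) = nbhd V E g \<times> {0..<n}"
  by (auto simp: nbhd_def lex_edges_def empty_edges_def)

lemma weight_lex: "g \<in> V \<Longrightarrow> weight (V \<times> {0..<n}) (lex_edges E empty_edges) f (g, i) =
    (\<Sum>g'\<in>nbhd V E g. \<Sum>j<n. f (g', j))"
  unfolding weight_def nbhd_lex
  by (simp add: sum.cartesian_product atLeast0LessThan)

lemma core_ineq:
  assumes fin: "finite V" and g: "is_graph V E"
    and bip: "\<forall>u v. E u v \<longrightarrow> (u \<in> Hi \<longleftrightarrow> v \<notin> Hi)"
    and hiS: "\<forall>v\<in>V. v \<in> Hi \<longrightarrow> A \<le> S v" and loS: "\<forall>v\<in>V. v \<notin> Hi \<longrightarrow> S v < (A::nat)"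
    and spr: "\<forall>v\<in>V. \<mu> \<le> S v \<and> S v \<le> \<mu> + 2" and mu: "2 * card V \<le> \<mu> + 1"
    and e: "E x y" and xH: "x \<in> Hi"
  shows "(\<Sum>v\<in>nbhd V E x. S v) \<noteq> (\<Sum>v\<in>nbhd V E y. S v)"
proof -
  have xy: "x \<in> V" "y \<in> V" "x \<noteq> y" "E y x" using g e by (auto simp: is_graph_def)
  have yH: "y \<notin> Hi" using bip e xH by blast
  define Nx where "Nx = nbhd V E x"
  define Ny where "Ny = nbhd V E y"
  have finN: "finite Nx" "finite Ny" using fin by (auto simp: Nx_def Ny_def nbhd_def)
  have NxL: "\<forall>v\<in>Nx. v \<in> V \<and> v \<notin> Hi" using bip xH by (auto simp: Nx_def nbhd_def)
  have NyH: "\<forall>v\<in>Ny. v \<in> V \<and> v \<in> Hi" using bip yH by (auto simp: Ny_def nbhd_def)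
  have yNx: "y \<in> Nx" using xy e by (simp add: Nx_def nbhd_def)
  have dx1: "1 \<le> card Nx" using finN yNx by (metis One_nat_def Suc_leI card_gt_0_iff empty_iff)
  have "Ny \<subseteq> V - {y}" using g by (auto simp: Ny_def nbhd_def is_graph_def)
  then have "card Ny \<le> card (V - {y})" using fin by (intro card_mono) auto
  moreover have "0 < card V" using xy fin card_gt_0_iff by blast
  ultimately have dy: "card Ny + 1 \<le> card V" using xy fin by simp
  have A1: "1 \<le> A" using loS xy yH by force
  have Wx1: "sum S Nx \<le> card Nx * (A - 1)"
    using sum_bounded_above[of Nx S "A - 1"] NxL loS by force
  have Wx2: "card Nx * \<mu> \<le> sum S Nx"
    using sum_bounded_below[of Nx \<mu> S] NxL spr by force
  have Wy1: "card Ny * A \<le> sum S Ny"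
    using sum_bounded_below[of Ny A S] NyH hiS by force
  have Wy2: "sum S Ny \<le> card Ny * (\<mu> + 2)"
    using sum_bounded_above[of Ny S "\<mu> + 2"] NyH spr by force
  show ?thesis
  proof (cases "card Nx \<le> card Ny")
    case True
    have "card Nx * (A - 1) < card Nx * A" using dx1 A1 by simp
    also have "\<dots> \<le> card Ny * A" using True by simp
    finally show ?thesis using Wx1 Wy1 by (simp add: Nx_def Ny_def)
  next
    case False
    have "card Ny * (\<mu> + 2) = card Ny * \<mu> + 2 * card Ny" by simp
    also have "\<dots> < card Ny * \<mu> + \<mu>" using dy mu by simp
    also have "\<dots> = (card Ny + 1) * \<mu>" by simp
    also have "\<dots> \<le> card Nx * \<mu>" using False by (intro mult_le_mono1) simp
    finally show ?thesis using Wx2 Wy2 by (simp add: Nx_def Ny_def)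
  qed
qed

lemma exists_lda:
  assumes t: "is_tree V E" and m3: "3 \<le> card V" and n2: "2 \<le> n"
  shows "\<exists>f. local_dist_antimagic (V \<times> empty_verts n) (lex_edges E empty_edges) f"
proof -
  have g: "is_graph V E" using t by (simp add: is_tree_def)
  have fin: "finite V" using g by (simp add: is_graph_def)
  have EV: "\<And>u v. E u v \<Longrightarrow> u \<in> V \<and> v \<in> V" using g by (auto simp: is_graph_def)
  define m where "m = card V"
  obtain H where bipH: "\<forall>u v. E u v \<longrightarrow> (u \<in> H \<longleftrightarrow> v \<notin> H)" using tree_bipartite[OF t] by blast
  define H0 where "H0 = V \<inter> H"
  define Hi where "Hi = (if 2 * card H0 \<le> m then H0 else V - H0)"
  have HiV: "Hi \<subseteq> V" by (auto simp: Hi_def H0_def)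
  have bip: "\<forall>u v. E u v \<longrightarrow> (u \<in> Hi \<longleftrightarrow> v \<notin> Hi)"
    using bipH EV by (auto simp: Hi_def H0_def)
  define p where "p = card Hi"
  have p2: "2 * p \<le> m"
  proof (cases "2 * card H0 \<le> m")
    case True then show ?thesis by (simp add: p_def Hi_def)
  next
    case False
    have "card (V - H0) = m - card H0" using fin by (simp add: m_def H0_def card_Diff_subset_Int)
    then show ?thesis using False by (simp add: p_def Hi_def)
  qed
  obtain b0 k \<theta> J \<mu> where bk: "b0 + 2*k \<le> m" and JS: "J \<subseteq> {0..<m}" and cJ: "card J = p"
    and hi: "\<forall>j\<in>J. \<theta> \<le> Psum n m b0 k j" and lo: "\<forall>j\<in>{0..<m} - J. Psum n m b0 k j < \<theta>"
    and spr: "\<forall>j<m. \<mu> \<le> Psum n m b0 k j \<and> Psum n m b0 k j \<le> \<mu> + 2" and mu: "m \<le> \<mu> + 3"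
    using numeric[OF n2 m3[folded m_def] p2] by blast
  have finHi: "finite Hi" "finite (V - Hi)" using fin HiV finite_subset by auto
  have "card (V - Hi) = m - p" using finHi HiV by (simp add: m_def p_def card_Diff_subset)
  moreover have "card ({0..<m} - J) = m - p" using JS cJ by (simp add: card_Diff_subset finite_subset)
  ultimately obtain \<sigma>2 where s2: "bij_betw \<sigma>2 (V - Hi) ({0..<m} - J)"
    using finite_same_card_bij[of "V - Hi" "{0..<m} - J"] finHi by auto
  obtain \<sigma>1 where s1: "bij_betw \<sigma>1 Hi J"
    using finite_same_card_bij[of Hi J] finHi cJ JS by (auto simp: p_def finite_subset)
  define \<sigma> where "\<sigma> v = (if v \<in> Hi then \<sigma>1 v else \<sigma>2 v)" for v
  have "bij_betw \<sigma> Hi J" using s1 by (rule bij_betw_cong[THEN iffD1, rotated]) (simp add: \<sigma>_def)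
  moreover have "bij_betw \<sigma> (V - Hi) ({0..<m} - J)"
    using s2 by (rule bij_betw_cong[THEN iffD1, rotated]) (simp add: \<sigma>_def)
  ultimately have "bij_betw \<sigma> (Hi \<union> (V - Hi)) (J \<union> ({0..<m} - J))"
    by (rule bij_betw_combine) auto
  moreover have "Hi \<union> (V - Hi) = V" "J \<union> ({0..<m} - J) = {0..<m}" using HiV JS by auto
  ultimately have sig: "bij_betw \<sigma> V {0..<m}" by simp
  have sigHi: "\<And>v. v \<in> Hi \<Longrightarrow> \<sigma> v \<in> J" using s1 by (auto simp: \<sigma>_def bij_betw_def)
  have sigLo: "\<And>v. v \<in> V - Hi \<Longrightarrow> \<sigma> v \<in> {0..<m} - J" using s2 by (auto simp: \<sigma>_def bij_betw_def)
  have sigm: "\<And>v. v \<in> V \<Longrightarrow> \<sigma> v < m" using sig by (auto simp: bij_betw_def)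
  have pb: "\<And>i. bij_betw (prow n m b0 k i) {0..<m} {0..<m}" using prow_bij[OF bk] by blast
  have pm: "\<And>i j. j < m \<Longrightarrow> prow n m b0 k i j < m"
  proof -
    fix i j assume "j < m"
    then have "prow n m b0 k i j \<in> prow n m b0 k i ` {0..<m}" by simp
    then show "prow n m b0 k i j < m" using pb[of i] by (simp add: bij_betw_def)
  qed
  define f where "f = (\<lambda>(v, i). i * m + prow n m b0 k i (\<sigma> v) + 1)"
  have cardP: "card (V \<times> empty_verts n) = m * n" by (simp add: empty_verts_def m_def card_cartesian_product)
  have inj: "inj_on f (V \<times> empty_verts n)"
  proof (rule inj_onI)
    fix x y assume x: "x \<in> V \<times> empty_verts n" and y: "y \<in> V \<times> empty_verts n" and e: "f x = f y"
    obtain v i where xv: "x = (v, i)" by (cases x)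
    obtain w j where yw: "y = (w, j)" by (cases y)
    have vw: "v \<in> V" "w \<in> V" using x y xv yw by auto
    define a where "a = prow n m b0 k i (\<sigma> v)"
    define b where "b = prow n m b0 k j (\<sigma> w)"
    have ab: "a < m" "b < m" using pm sigm vw by (auto simp: a_def b_def)
    have e2: "i * m + a = j * m + b" using e by (simp add: f_def xv yw a_def b_def)
    have "(i * m + a) div m = i" "(j * m + b) div m = j" using ab by auto
    then have ij: "i = j" using e2 by simp
    then have "a = b" using e2 by simp
    then have "\<sigma> v = \<sigma> w" using pb[of i] ij sigm vw
      unfolding a_def b_def bij_betw_def inj_on_def by auto
    then have "v = w" using sig vw by (auto simp: bij_betw_def inj_on_def)
    then show "x = y" using xv yw ij by simp
  qed
  have img: "f ` (V \<times> empty_verts n) \<subseteq> {1..m * n}"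
  proof
    fix z assume "z \<in> f ` (V \<times> empty_verts n)"
    then obtain v i where vi: "v \<in> V" "i < n" "z = i * m + prow n m b0 k i (\<sigma> v) + 1"
      by (auto simp: f_def empty_verts_def)
    have "prow n m b0 k i (\<sigma> v) < m" using pm sigm vi by auto
    then have "z \<le> i * m + m" using vi by simp
    also have "\<dots> = (i + 1) * m" by simp
    also have "\<dots> \<le> n * m" using vi by (intro mult_le_mono1) simp
    finally show "z \<in> {1..m * n}" using vi by (simp add: mult.commute)
  qed
  have bij: "bij_betw f (V \<times> empty_verts n) {1..card (V \<times> empty_verts n)}"
  proof -
    have "card (f ` (V \<times> empty_verts n)) = m * n" using card_image[OF inj] cardP by simp
    then have "f ` (V \<times> empty_verts n) = {1..m * n}"
      using img by (intro card_subset_eq) auto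
    then show ?thesis using inj cardP by (simp add: bij_betw_def)
  qed
  define cst where "cst = (\<Sum>i<n. i * m + 1)"
  have Sdef: "(\<Sum>i<n. f (v, i)) = cst + Psum n m b0 k (\<sigma> v)" for v
  proof -
    have "(\<lambda>i. f (v, i)) = (\<lambda>i. (i * m + 1) + prow n m b0 k i (\<sigma> v))" by (auto simp: f_def)
    then show ?thesis by (simp only: sum.distrib cst_def Psum_def)
  qed
  have cst2: "m + 2 \<le> cst"
  proof -
    have "(\<Sum>i<2. i * m + 1) \<le> cst" unfolding cst_def using n2 by (intro sum_mono2) auto
    then show ?thesis by (simp add: numeral_2_eq_2)
  qed
  define S where "S v = (\<Sum>i<n. f (v, i))" for v
  have hiS: "\<forall>v\<in>V. v \<in> Hi \<longrightarrow> cst + \<theta> \<le> S v" using hi sigHi Sdef by (auto simp: S_def)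
  have loS: "\<forall>v\<in>V. v \<notin> Hi \<longrightarrow> S v < cst + \<theta>" using lo sigLo Sdef by (auto simp: S_def)
  have sprS: "\<forall>v\<in>V. cst + \<mu> \<le> S v \<and> S v \<le> cst + \<mu> + 2" using spr sigm Sdef by (auto simp: S_def)
  have muS: "2 * card V \<le> cst + \<mu> + 1" using cst2 mu by (simp add: m_def)
  have W: "\<And>v i. v \<in> V \<Longrightarrow> weight (V \<times> empty_verts n) (lex_edges E empty_edges) f (v, i) =
      (\<Sum>u\<in>nbhd V E v. S u)"
    using weight_lex by (simp add: empty_verts_def S_def)
  have "\<forall>x y. x \<in> V \<times> empty_verts n \<and> y \<in> V \<times> empty_verts n \<and> lex_edges E empty_edges x y \<longrightarrow>
     weight (V \<times> empty_verts n) (lex_edges E empty_edges) f x \<noteq> weight (V \<times> empty_verts n) (lex_edges E empty_edges) f y"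
  proof (intro allI impI)
    fix x y assume a: "x \<in> V \<times> empty_verts n \<and> y \<in> V \<times> empty_verts n \<and> lex_edges E empty_edges x y"
    obtain v i where xv: "x = (v, i)" by (cases x)
    obtain w j where yw: "y = (w, j)" by (cases y)
    have vw: "v \<in> V" "w \<in> V" "E v w" using a xv yw by (auto simp: lex_edges_def empty_edges_def)
    have "(\<Sum>u\<in>nbhd V E v. S u) \<noteq> (\<Sum>u\<in>nbhd V E w. S u)"
    proof (cases "v \<in> Hi")
      case True
      show ?thesis by (rule core_ineq[OF fin g bip hiS loS sprS muS vw(3) True])
    next
      case False
      then have "w \<in> Hi" using bip vw by blast
      moreover have "E w v" using g vw by (auto simp: is_graph_def)
      ultimately show ?thesis using core_ineq[OF fin g bip hiS loS sprS muS] by metis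
    qed
    then show "weight (V \<times> empty_verts n) (lex_edges E empty_edges) f x \<noteq> weight (V \<times> empty_verts n) (lex_edges E empty_edges) f y"
      using W vw xv yw by simp
  qed
  then show ?thesis using bij by (auto simp: local_dist_antimagic_def)
qed

abbreviation "PW V E n f \<equiv> weight (V \<times> empty_verts n) (lex_edges E empty_edges) f"

lemma lda_card_ge2:
  assumes t: "is_tree V E" and m2: "2 \<le> card V" and n1: "1 \<le> n"
    and l: "local_dist_antimagic (V \<times> empty_verts n) (lex_edges E empty_edges) f"
  shows "2 \<le> card (PW V E n f ` (V \<times> empty_verts n))"
proof -
  have g: "is_graph V E" using t by (simp add: is_tree_def)
  have fin: "finite V" using g by (simp add: is_graph_def)
  obtain u v where e: "E u v" using tree_has_edge[OF t m2] by blast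
  then have uv: "u \<in> V" "v \<in> V" using g by (auto simp: is_graph_def)
  have mem: "(u, 0) \<in> V \<times> empty_verts n" "(v, 0) \<in> V \<times> empty_verts n"
    using uv n1 by (auto simp: empty_verts_def)
  have le: "lex_edges E empty_edges (u, 0) (v, 0)" using e by (simp add: lex_edges_def)
  have ne: "PW V E n f (u, 0) \<noteq> PW V E n f (v, 0)"
    using l mem le unfolding local_dist_antimagic_def by blast
  have "{PW V E n f (u, 0), PW V E n f (v, 0)} \<subseteq> PW V E n f ` (V \<times> empty_verts n)"
    using mem by blast
  moreover have "finite (PW V E n f ` (V \<times> empty_verts n))" using fin by (simp add: empty_verts_def)
  ultimately have "card {PW V E n f (u, 0), PW V E n f (v, 0)} \<le> card (PW V E n f ` (V \<times> empty_verts n))"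
    by (rule card_mono[rotated])
  then show ?thesis using ne by simp
qed

lemma star_card_le2:
  assumes s: "is_star V E" and fin: "finite V"
  shows "card (PW V E n f ` (V \<times> empty_verts n)) \<le> 2"
proof -
  obtain c where cV: "c \<in> V" and st: "\<forall>u v. E u v \<longleftrightarrow> (u \<in> V \<and> v \<in> V \<and> u \<noteq> v \<and> (u = c \<or> v = c))"
    using s by (auto simp: is_star_def)
  define S where "S x = (\<Sum>j<n. f (x, j))" for x
  have "PW V E n f ` (V \<times> empty_verts n) \<subseteq> {PW V E n f (c, 0), S c}"
  proof
    fix w assume "w \<in> PW V E n f ` (V \<times> empty_verts n)"
    then obtain g i where gi: "g \<in> V" "i < n" "w = PW V E n f (g, i)" by (auto simp: empty_verts_def)
    show "w \<in> {PW V E n f (c, 0), S c}"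
    proof (cases "g = c")
      case True
      then have "w = (\<Sum>u\<in>nbhd V E c. S u)" using gi weight_lex[of c V n E f i]
        by (simp add: empty_verts_def S_def)
      also have "\<dots> = PW V E n f (c, 0)" using weight_lex[of c V n E f 0] cV
        by (simp add: empty_verts_def S_def)
      finally show ?thesis by simp
    next
      case False
      have "nbhd V E g = {c}" using st gi False cV by (auto simp: nbhd_def)
      then show ?thesis using gi weight_lex[of g V n E f i] by (simp add: empty_verts_def S_def)
    qed
  qed
  then have "card (PW V E n f ` (V \<times> empty_verts n)) \<le> card {PW V E n f (c, 0), S c}"
    by (rule card_mono[rotated]) simp
  also have "\<dots> \<le> 2" by (simp add: card_insert_if)
  finally show ?thesis .
qed

lemma card2_star:
  assumes t: "is_tree V E" and m2: "2 \<le> card V" and n1: "1 \<le> n"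
    and l: "local_dist_antimagic (V \<times> empty_verts n) (lex_edges E empty_edges) f"
    and c2: "card (PW V E n f ` (V \<times> empty_verts n)) = 2"
  shows "is_star V E"
proof -
  have g: "is_graph V E" using t by (simp add: is_tree_def)
  have fin: "finite V" using g by (simp add: is_graph_def)
  have sym: "\<And>x y. E x y \<Longrightarrow> E y x" and EV: "\<And>x y. E x y \<Longrightarrow> x \<in> V \<and> y \<in> V \<and> x \<noteq> y"
    using g by (auto simp: is_graph_def)
  obtain a b where aV: "a \<in> V" and ab: "E a b" and leaf: "\<forall>u. E a u \<longrightarrow> u = b"
    using tree_leaf[OF t m2] by blast
  define S where "S x = (\<Sum>j<n. f (x, j))" for x
  define W where "W x = (\<Sum>u\<in>nbhd V E x. S u)" for x
  have PWW: "\<And>x. x \<in> V \<Longrightarrow> PW V E n f (x, 0) = W x"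
    using weight_lex by (simp add: empty_verts_def S_def W_def)
  have mem: "\<And>x. x \<in> V \<Longrightarrow> (x, 0) \<in> V \<times> empty_verts n" using n1 by (auto simp: empty_verts_def)
  have adjW: "\<And>x y. E x y \<Longrightarrow> W x \<noteq> W y"
  proof -
    fix x y assume e: "E x y"
    have "lex_edges E empty_edges (x, 0) (y, 0)" using e by (simp add: lex_edges_def)
    then have "PW V E n f (x, 0) \<noteq> PW V E n f (y, 0)"
      using l mem EV[OF e] unfolding local_dist_antimagic_def by blast
    then show "W x \<noteq> W y" using PWW EV[OF e] by simp
  qed
  have Spos: "\<And>x. x \<in> V \<Longrightarrow> 0 < S x"
  proof -
    fix x assume x: "x \<in> V"
    have "f (x, 0) \<in> {1..card (V \<times> empty_verts n)}"
      using l mem[OF x] unfolding local_dist_antimagic_def bij_betw_def by blast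
    then have "0 < f (x, 0)" by simp
    moreover have "f (x, 0) \<le> S x" unfolding S_def using n1 by (intro member_le_sum) auto
    ultimately show "0 < S x" by simp
  qed
  have finI: "finite (PW V E n f ` (V \<times> empty_verts n))" using fin by (simp add: empty_verts_def)
  have bV: "b \<in> V" using EV[OF ab] by simp
  have imgm: "W x \<in> PW V E n f ` (V \<times> empty_verts n)" if x: "x \<in> V" for x
  proof -
    have "PW V E n f (x, 0) \<in> PW V E n f ` (V \<times> empty_verts n)" using mem[OF x] by (rule imageI)
    then show ?thesis using PWW[OF x] by simp
  qed
  have Na: "nbhd V E a = {b}" unfolding nbhd_def using leaf ab bV by blast
  have Wa: "W a = S b" using Na by (simp add: W_def)
  have nb: "\<forall>x. E u x \<longrightarrow> x = b" if ub: "E b u" for u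
  proof -
    have uV: "u \<in> V" using EV[OF ub] by simp
    have "W u = W a"
    proof (rule ccontr)
      assume ne: "W u \<noteq> W a"
      have "W a \<noteq> W b" using adjW[OF ab] .
      moreover have "W u \<noteq> W b" using adjW[OF sym[OF ub]] .
      ultimately have "card {W a, W b, W u} = 3" using ne by (simp add: card_insert_if)
      moreover have "{W a, W b, W u} \<subseteq> PW V E n f ` (V \<times> empty_verts n)"
        using imgm[OF aV] imgm[OF bV] imgm[OF uV] by blast
      ultimately have "3 \<le> card (PW V E n f ` (V \<times> empty_verts n))"
        using card_mono[OF finI, of "{W a, W b, W u}"] by simp
      then show False using c2 by simp
    qed
    show ?thesis
    proof (intro allI impI)
      fix x assume ux: "E u x"
      show "x = b"
      proof (rule ccontr)
        assume xb: "x \<noteq> b"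
        have xV: "x \<in> V" using EV[OF ux] by simp
        have sub: "{b, x} \<subseteq> nbhd V E u" using ux sym[OF ub] bV xV unfolding nbhd_def by blast
        have fN: "finite (nbhd V E u)" using fin unfolding nbhd_def by simp
        have "sum S {b, x} \<le> sum S (nbhd V E u)" by (rule sum_mono2[OF fN sub]) simp
        moreover have "sum S {b, x} = S b + S x" using xb by simp
        ultimately have "S b + S x \<le> W u" unfolding W_def by simp
        then show False using \<open>W u = W a\<close> Wa Spos[OF xV] by simp
      qed
    qed
  qed
  have reach: "x = b \<or> E b x" if "x \<in> V" for x
  proof -
    have "connected_graph V E" using t by (simp add: is_tree_def)
    then have "E\<^sup>*\<^sup>* b x" using bV that unfolding connected_graph_def by blast
    then show ?thesis
    proof (induction rule: rtranclp_induct)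
      case base then show ?case by simp
    next
      case (step y z)
      from step.IH show ?case
      proof
        assume "y = b" then show ?thesis using step(2) by simp
      next
        assume "E b y" then have "z = b" using nb[of y] step(2) by blast
        then show ?thesis by simp
      qed
    qed
  qed
  have "\<forall>u v. E u v \<longleftrightarrow> (u \<in> V \<and> v \<in> V \<and> u \<noteq> v \<and> (u = b \<or> v = b))"
  proof (intro allI iffI)
    fix u v assume e: "E u v"
    have "u = b \<or> v = b"
    proof (rule ccontr)
      assume "\<not> (u = b \<or> v = b)"
      then have "E b u" using reach[of u] EV[OF e] by simp
      then have "v = b" using nb[of u] e by blast
      then show False using \<open>\<not> (u = b \<or> v = b)\<close> by simp
    qed
    then show "u \<in> V \<and> v \<in> V \<and> u \<noteq> v \<and> (u = b \<or> v = b)" using EV[OF e] by simp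
  next
    fix u v assume a: "u \<in> V \<and> v \<in> V \<and> u \<noteq> v \<and> (u = b \<or> v = b)"
    show "E u v"
    proof (cases "u = b")
      case True
      then show ?thesis using reach[of v] a by auto
    next
      case False
      then have "v = b" using a by simp
      then show ?thesis using reach[of u] a sym[of b u] by simp
    qed
  qed
  then show ?thesis using bV unfolding is_star_def by blast
qed

theorem mainTheorem9:
  fixes V :: "'a set" and E :: "'a \<Rightarrow> 'a \<Rightarrow> bool" and n :: nat
  assumes "n \<ge> 2" and "is_tree V E" and "card V \<ge> 3"
  shows "chi_ld (V \<times> empty_verts n) (lex_edges E empty_edges) = 2 \<longleftrightarrow> is_star V E"
proof -
  have n1: "1 \<le> n" and m2: "2 \<le> card V" using assms by auto
  have fin: "finite V" using assms(2) by (simp add: is_tree_def is_graph_def)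
  obtain f0 where f0: "local_dist_antimagic (V \<times> empty_verts n) (lex_edges E empty_edges) f0"
    using exists_lda[OF assms(2) assms(3) assms(1)] by blast
  define P where "P k \<longleftrightarrow> (\<exists>f. local_dist_antimagic (V \<times> empty_verts n) (lex_edges E empty_edges) f \<and>
      card (PW V E n f ` (V \<times> empty_verts n)) = k)" for k
  have chi: "chi_ld (V \<times> empty_verts n) (lex_edges E empty_edges) = Least P"
    unfolding chi_ld_def P_def[abs_def] by (rule refl)
  have ge2: "2 \<le> k" if "P k" for k
  proof -
    from that obtain f where f: "local_dist_antimagic (V \<times> empty_verts n) (lex_edges E empty_edges) f"
      and c: "card (PW V E n f ` (V \<times> empty_verts n)) = k" unfolding P_def by blast
    show "2 \<le> k" using lda_card_ge2[OF assms(2) m2 n1 f] c by simp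
  qed
  have P0: "P (card (PW V E n f0 ` (V \<times> empty_verts n)))" unfolding P_def using f0 by blast
  show ?thesis
  proof
    assume c: "chi_ld (V \<times> empty_verts n) (lex_edges E empty_edges) = 2"
    have "P (Least P)" using P0 by (rule LeastI)
    then have "P 2" using c chi by simp
    then obtain f where "local_dist_antimagic (V \<times> empty_verts n) (lex_edges E empty_edges) f"
      "card (PW V E n f ` (V \<times> empty_verts n)) = 2" unfolding P_def by blast
    then show "is_star V E" using card2_star[OF assms(2) m2 n1] by blast
  next
    assume s: "is_star V E"
    have "card (PW V E n f0 ` (V \<times> empty_verts n)) = 2"
      using lda_card_ge2[OF assms(2) m2 n1 f0] star_card_le2[OF s fin, of n f0] by (rule antisym[rotated])
    then have "P 2" using P0 by simp
    then have L2: "Least P = 2" using ge2 by (intro Least_equality) auto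
    show "chi_ld (V \<times> empty_verts n) (lex_edges E empty_edges) = 2" using trans[OF chi L2] .
  qed
qed

end
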